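(* Let $p\ge 5$ be a prime and let $n$, $m$ and $s$ be nonnegative integers such that $n\ge m$ and $s\ge 1$. Let $r=\sum_{j=0}^{s-1}a_jp^j$ with integers $a_j$ such that $1\le a_0\le p-1$ and $0\le a_j\le p-1$ for all $j=1,\ldots,s-1$. Then \[ \binom{np^s}{mp^s+r}\equiv (m+1)\binom{n}{m+1}\binom{p^s}{r}\pmod{p^{s+1}}. \]
   Context: Binomial coefficients follow the convention $\binom{l}{t}=0$ if $l<t$ and $\binom{0}{0}=1$. *)

theory Defs
  imports "HOL-Number_Theory.Number_Theory"
begin

end

theory Submission
  imports Defs
begin

lemma absorb: "0 < j \<Longrightarrow> p^s dvd j * ((M * p^s) choose j)"
  by (simp add: times_binomial_minus1_eq)

lemma pdvd_choose:
  assumes "prime (p::nat)" "0 < k" "k < p^s"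
  shows "p dvd (p^s choose k)"
proof (rule ccontr)
  assume "\<not> p dvd (p^s choose k)"
  hence "coprime (p^s) (p^s choose k)"
    using assms(1) by (simp add: prime_imp_coprime coprime_commute)
  moreover have "p^s dvd k * (p^s choose k)" using absorb[OF assms(2), of p s 1] by simp
  ultimately have "p^s dvd k" using coprime_dvd_mult_left_iff by blast
  thus False using assms by (simp add: nat_dvd_not_less)
qed

lemma ps_dvd_choose:
  assumes "prime (p::nat)" "0 < r" "\<not> p dvd r"
  shows "p^s dvd (p^s choose r)"
proof -
  have "coprime (p^s) r" using assms by (simp add: prime_imp_coprime)
  moreover have "p^s dvd r * (p^s choose r)" using absorb[OF assms(2), of p s 1] by simp
  ultimately show ?thesis using coprime_dvd_mult_right_iff by blast
qed

lemma mult_bound: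
  assumes p: "prime (p::nat)" and X: "X \<noteq> 0" and Y: "Y \<noteq> 0"
    and h1: "p^a dvd X * Y" and h2: "\<not> p^b dvd X" and ba: "b \<le> a"
  shows "p^(a - b + 1) dvd Y"
proof -
  have nu: "\<not> is_unit p" using prime_gt_1_nat[OF p] by simp
  have "a \<le> multiplicity p (X*Y)" using power_dvd_iff_le_multiplicity[of "X*Y" p a] X Y nu h1 by simp
  moreover have "multiplicity p (X*Y) = multiplicity p X + multiplicity p Y"
    using prime_elem_multiplicity_mult_distrib[of p X Y] p X Y by simp
  moreover have "multiplicity p X < b" using power_dvd_iff_le_multiplicity[of X p b] X nu h2 by simp
  ultimately have "a - b + 1 \<le> multiplicity p Y" using ba by arith
  thus ?thesis by (rule multiplicity_dvd')
qed

lemma cross: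
  assumes p: "prime (p::nat)" and s: "s \<ge> 1" and r: "0 < r" "r < p^s" "\<not> p dvd r"
    and k: "0 < k" "k < p^s" "k \<noteq> r" "k \<le> m * p^s + r"
  shows "p^(s+1) dvd (p^s choose k) * ((N * p^s) choose (m * p^s + r - k))"
proof -
  define K where "K = m * p^s + r"
  have p0: "p > 1" using p prime_gt_1_nat by blast
  have Kk: "K - k > 0"
  proof (rule ccontr)
    assume "\<not> K - k > 0"
    hence "K = k" using k K_def by simp
    hence "m * p^s < p^s" using k(2) K_def by linarith
    hence "m = 0" by (cases m) auto
    thus False using \<open>K = k\<close> K_def k(3) by simp
  qed
  have ndvd: "\<not> p^s dvd k * (K - k)"
  proof
    assume H: "p^s dvd k * (K - k)"
    have "p dvd p^s" using s by (intro dvd_power) simp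
    hence pK: "p dvd m * p^s" by (rule dvd_mult)
    show False
    proof (cases "p dvd k")
      case True
      have "\<not> p dvd (K - k)"
      proof
        assume "p dvd K - k"
        hence "p dvd (K - k) + k" using True by (rule dvd_add)
        moreover have "(K - k) + k = K" using k(4) K_def by simp
        ultimately have "p dvd m * p^s + r" using K_def by simp
        thus False using pK r(3) by (metis dvd_add_right_iff)
      qed
      hence "coprime (p^s) (K - k)" using p by (simp add: prime_imp_coprime)
      hence "p^s dvd k" using H coprime_dvd_mult_left_iff by blast
      thus False using k by (simp add: nat_dvd_not_less)
    next
      case False
      hence "coprime (p^s) k" using p by (simp add: prime_imp_coprime)
      hence "p^s dvd (K - k)" using H coprime_dvd_mult_right_iff by blast
      hence d: "int (p^s) dvd int (K - k)" by (simp only: int_dvd_int_iff)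
      have e: "int (K - k) = int m * int (p^s) + (int r - int k)"
        using k(4) K_def by (simp add: of_nat_diff)
      have "int (p^s) dvd int m * int (p^s) + (int r - int k)" using d by (simp only: e)
      hence "int (p^s) dvd int r - int k"
        by (metis dvd_add_right_iff dvd_triv_right)
      moreover have "int r - int k \<noteq> 0" using k(3) by simp
      ultimately have "\<bar>int (p^s)\<bar> \<le> \<bar>int r - int k\<bar>" using dvd_imp_le_int by blast
      moreover have "int r < int (p ^ s)" "int k < int (p ^ s)"
        using r(2) k(2) by (simp only: of_nat_less_iff)+
      moreover have "int r \<ge> 0" "int k \<ge> 0" by simp_all
      ultimately show False by arith
    qed
  qed
  show ?thesis
  proof (cases "((N * p^s) choose (K - k)) = 0")
    case True thus ?thesis unfolding K_def by (simp only: mult_0_right dvd_0_right)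
  next
    case False
    have Y0: "(p^s choose k) * ((N * p^s) choose (K - k)) \<noteq> 0" using False k(2) by simp
    have "p^s * p^s dvd (k * (p^s choose k)) * ((K - k) * ((N * p^s) choose (K - k)))"
    proof (rule mult_dvd_mono)
      show "p ^ s dvd k * (p ^ s choose k)" using absorb[OF k(1), of p s 1] by simp
      show "p ^ s dvd (K - k) * (N * p ^ s choose (K - k))" using absorb[OF Kk, of p s N] .
    qed
    hence "p^(s+s) dvd (k * (K - k)) * ((p^s choose k) * ((N * p^s) choose (K - k)))"
      by (simp only: power_add mult_ac)
    from mult_bound[OF p _ Y0 this ndvd] k(1) Kk le_add2
    have "p ^ (s + s - s + 1) dvd (p^s choose k) * ((N * p^s) choose (K - k))" by simp
    thus ?thesis unfolding K_def by simp
  qed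
qed

lemma lucas_like:
  assumes p: "prime (p::nat)"
  shows "[int ((a*p^s) choose (b*p^s)) = int (a choose b)] (mod int p)"
proof (induction a arbitrary: b)
  case 0
  have "p^s > 0" using p prime_gt_0_nat by simp
  thus ?case by (cases b) (auto simp: binomial_eq_0)
next
  case (Suc a)
  have ps: "p^s > 0" using p prime_gt_0_nat by simp
  define f where "f k = int ((p^s choose k) * ((a*p^s) choose (b*p^s - k)))" for k
  define g where "g k = (if k = 0 then f k else 0) + (if k = p^s then f k else 0)" for k
  have "int ((Suc a * p^s) choose (b*p^s)) = int (\<Sum>k\<le>b*p^s. (p^s choose k) * ((a*p^s) choose (b*p^s - k)))"
    using vandermonde[of "p^s" "a*p^s" "b*p^s"] by (simp add: add.commute)
  also have "\<dots> = (\<Sum>k\<le>b*p^s. f k)" unfolding f_def by simp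
  also have "[\<dots> = (\<Sum>k\<le>b*p^s. g k)] (mod int p)"
  proof (rule cong_sum)
    fix k assume "k \<in> {..b*p^s}"
    show "[f k = g k] (mod int p)"
    proof (cases "k = 0 \<or> k = p^s")
      case True thus ?thesis using ps unfolding g_def by auto
    next
      case False
      hence g0: "g k = 0" unfolding g_def by simp
      show ?thesis
      proof (cases "k < p^s")
        case True
        hence "p dvd (p^s choose k)" using pdvd_choose[OF p] False by simp
        hence "int p dvd f k" unfolding f_def by (simp add: int_dvd_int_iff)
        thus ?thesis using g0 by (simp add: cong_0_iff)
      next
        case False
        hence "k > p^s" using \<open>\<not> (k = 0 \<or> k = p^s)\<close> by simp
        hence "f k = 0" unfolding f_def by simp
        thus ?thesis using g0 by simp
      qed
    qed
  qed
  also have "(\<Sum>k\<le>b*p^s. g k) = f 0 + (if p^s \<le> b*p^s then f (p^s) else 0)"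
    unfolding g_def by (simp add: sum.distrib)
  also have "[\<dots> = int (Suc a choose b)] (mod int p)"
  proof (cases b)
    case 0
    have "f 0 = int ((a * p^s) choose (b*p^s))" unfolding f_def by simp
    hence "[f 0 = int (a choose b)] (mod int p)" using Suc.IH[of b] by simp
    moreover have "b*p^s = 0" using 0 by simp
    hence "\<not> p^s \<le> b*p^s" using ps by linarith
    hence "(if p^s \<le> b*p^s then f (p^s) else 0) = 0" by (rule if_not_P)
    ultimately show ?thesis using 0 by auto
  next
    case (Suc b')
    have "f 0 = int ((a * p^s) choose (b*p^s))" unfolding f_def by simp
    hence c1: "[f 0 = int (a choose b)] (mod int p)" using Suc.IH[of b] by simp
    have "b*p^s - p^s = b'*p^s" using Suc by simp
    hence "f (p^s) = int ((a * p^s) choose (b'*p^s))" unfolding f_def by simp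
    hence c2: "[f (p^s) = int (a choose b')] (mod int p)" using Suc.IH[of b'] by simp
    have "p^s \<le> b*p^s" using Suc by simp
    hence "f 0 + (if p^s \<le> b*p^s then f (p^s) else 0) = f 0 + f (p^s)" by simp
    moreover have "[f 0 + f (p^s) = int (a choose b) + int (a choose b')] (mod int p)"
      using c1 c2 by (rule cong_add)
    moreover have "int (a choose b) + int (a choose b') = int (Suc a choose b)"
      using Suc by simp
    ultimately show ?thesis by simp
  qed
  finally show ?case .
qed


lemma lift_cong:
  fixes c x y :: int
  assumes "int p^s dvd c" "[x = y] (mod int p)"
  shows "[c * x = c * y] (mod int p^(s+1))"
proof -
  have "int p dvd x - y" using assms(2) by (simp add: cong_iff_dvd_diff)
  hence "int p^s * int p dvd c * (x - y)" using assms(1) by (rule mult_dvd_mono[rotated])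
  thus ?thesis by (simp add: cong_iff_dvd_diff right_diff_distrib power_Suc2 mult.commute)
qed

lemma main:
  assumes p: "prime (p::nat)" and s: "s \<ge> 1" and r: "0 < r" "r < p^s" "\<not> p dvd r"
  shows "[int ((n*p^s) choose (m*p^s + r)) = int (m+1) * int (n choose (m+1)) * int (p^s choose r)] (mod int p^(s+1))"
proof (induction n arbitrary: m)
  case 0
  thus ?case using r by (simp add: binomial_eq_0)
next
  case (Suc n)
  define c where "c = int (p^s choose r)"
  define K where "K = m*p^s + r"
  define f where "f k = int ((p^s choose k) * ((n*p^s) choose (K - k)))" for k
  define g where "g k = (if k = 0 then f k else 0) + (if k = r then f k else 0) + (if k = p^s then f k else 0)" for k
  have ps: "p^s > 0" using p prime_gt_0_nat by simp
  have cdvd: "int p^s dvd c" unfolding c_def using ps_dvd_choose[OF p r(1) r(3), of s]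
    by (metis int_dvd_int_iff of_nat_power)
  have "int ((Suc n * p^s) choose K) = int (\<Sum>k\<le>K. (p^s choose k) * ((n*p^s) choose (K - k)))"
    using vandermonde[of "p^s" "n*p^s" K] by (simp add: add.commute)
  also have "\<dots> = (\<Sum>k\<le>K. f k)" unfolding f_def by simp
  also have "[\<dots> = (\<Sum>k\<le>K. g k)] (mod int p^(s+1))"
  proof (rule cong_sum)
    fix k assume kK: "k \<in> {..K}"
    show "[f k = g k] (mod int p^(s+1))"
    proof (cases "k = 0 \<or> k = r \<or> k = p^s")
      case True thus ?thesis using r(1,2) ps prime_gt_0_nat[OF p] unfolding g_def by auto
    next
      case False
      hence g0: "g k = 0" unfolding g_def by simp
      show ?thesis
      proof (cases "k < p^s")
        case True
        hence "p^(s+1) dvd (p^s choose k) * ((n * p^s) choose (m * p^s + r - k))"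
          using cross[OF p s r, of k m n] False kK K_def by simp
        hence "int p^(s+1) dvd f k" unfolding f_def K_def by (metis int_dvd_int_iff of_nat_power)
        thus ?thesis using g0 by (simp add: cong_0_iff)
      next
        case False
        hence "k > p^s" using \<open>\<not> (k = 0 \<or> k = r \<or> k = p^s)\<close> by simp
        hence "f k = 0" unfolding f_def by simp
        thus ?thesis using g0 by simp
      qed
    qed
  qed
  also have "(\<Sum>k\<le>K. g k) = f 0 + f r + (if p^s \<le> K then f (p^s) else 0)"
    unfolding g_def using K_def by (simp add: sum.distrib)
  also have "[\<dots> = int (m+1) * int (n choose (m+1)) * c + c * int (n choose m) + int m * int (n choose m) * c] (mod int p^(s+1))"
  proof (rule cong_add[OF cong_add])
    have "f 0 = int ((n*p^s) choose (m*p^s + r))" unfolding f_def K_def by simp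
    thus "[f 0 = int (m+1) * int (n choose (m+1)) * c] (mod int p^(s+1))"
      using Suc.IH[of m] unfolding c_def by simp
    have "f r = c * int ((n*p^s) choose (m*p^s))" unfolding f_def K_def c_def by simp
    thus "[f r = c * int (n choose m)] (mod int p^(s+1))"
      using lift_cong[OF cdvd lucas_like[OF p, of n s m]] by simp
    show "[(if p^s \<le> K then f (p^s) else 0) = int m * int (n choose m) * c] (mod int p^(s+1))"
    proof (cases m)
      case 0
      hence "\<not> p^s \<le> K" using K_def r by simp
      thus ?thesis using 0 by simp
    next
      case (Suc m')
      hence "p^s \<le> K" using K_def by simp
      moreover have "K - p^s = m'*p^s + r" using Suc K_def by simp
      ultimately have "(if p^s \<le> K then f (p^s) else 0) = int ((n*p^s) choose (m'*p^s + r))"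
        unfolding f_def by simp
      thus ?thesis using Suc.IH[of m'] Suc unfolding c_def by simp
    qed
  qed
  also have "int (m+1) * int (n choose (m+1)) * c + c * int (n choose m) + int m * int (n choose m) * c
      = int (m+1) * int (Suc n choose (m+1)) * c"
    by (simp add: algebra_simps)
  finally show ?case unfolding K_def c_def by simp
qed


lemma geo_int: "(\<Sum>j<s. (int p - 1) * int p ^ j) = int p ^ s - 1"
  by (induction s) (simp_all add: algebra_simps)

theorem corollary1p2:
  fixes p n m s r :: nat and a :: "nat \<Rightarrow> int"
  assumes "prime p" and "p \<ge> 5"
    and "n \<ge> m" and "s \<ge> 1"
    and "1 \<le> a 0" and "a 0 \<le> int p - 1"
    and "\<forall>j\<in>{1..s-1}. 0 \<le> a j \<and> a j \<le> int p - 1"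
    and "int r = (\<Sum>j<s. a j * int p ^ j)"
  shows "[int ((n * p ^ s) choose (m * p ^ s + r))
          = int (m + 1) * int (n choose (m + 1)) * int ((p ^ s) choose r)] (mod (int p ^ (s + 1)))"
proof -
  have aj: "0 \<le> a j \<and> a j \<le> int p - 1" if "j \<in> {1..<s}" for j
    using assms(7) that by auto
  have aall: "a j \<le> int p - 1" if "j < s" for j
    using aj[of j] assms(6) that by (cases "j = 0") auto
  define T where "T = (\<Sum>j\<in>{1..<s}. a j * int p ^ j)"
  have "{..<s} = insert 0 {1..<s}" using assms(4) by auto
  hence R: "int r = a 0 + T" unfolding T_def using assms(8) by simp
  have T0: "T \<ge> 0" unfolding T_def using aj by (intro sum_nonneg) simp
  have Tdvd: "int p dvd T" unfolding T_def
    by (intro dvd_sum) (auto intro: dvd_mult dvd_power)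
  have "int r \<le> (\<Sum>j<s. (int p - 1) * int p ^ j)" unfolding assms(8)
    using aall by (intro sum_mono mult_right_mono) auto
  hence "int r \<le> int p ^ s - 1" by (simp only: geo_int)
  hence r2: "r < p^s" by (metis of_nat_less_iff of_nat_power zle_diff1_eq le_less_trans less_add_one not_less diff_add_cancel)
  have r1: "0 < r" using R T0 assms(5) by simp
  have r3: "\<not> p dvd r"
  proof
    assume "p dvd r"
    hence "int p dvd a 0 + T" using R by (metis int_dvd_int_iff)
    hence "int p dvd a 0" using Tdvd by (simp add: dvd_add_left_iff)
    hence "int p \<le> a 0" using assms(5) zdvd_imp_le by simp
    thus False using assms(6) by simp
  qed
  show ?thesis using main[OF assms(1) assms(4) r1 r2 r3] by simp
qed

end
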